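(* Let $X$, $\mu$, $d$, $k$, $\mathfrak d_+$, $\mathbf z\mapsto f_{\mathbf z}$ and $\Delta$ be as follows: $X$ a metric space with probability measure $\mu$, $d,k\in\mathbb N$, $\mathfrak d_+\subset\mathbb R^d$ a nonempty open cone, $\mathbf z\mapsto f_{\mathbf z}$ a continuous homomorphism from $\mathfrak d_+$ to the semigroup of $\mu$-preserving measurable self-maps of $X$, $\Delta$ a $k$-DL function on $X$. Let $t_0\in\mathbb R$ and $r:[t_0,\infty)\to\mathbb R$ quasi-increasing with $\int_{t_0}^\infty t^{d-1}e^{-kr(t)}\,dt=\infty$. Assume there is a lattice $\Sigma\subset\mathbb R^d$ such that $\mathcal B(\Delta)$ is Borel–Cantelli for $F=\{f_{\mathbf z}:\mathbf z\in\mathfrak d_+\cap\Sigma\}$. Then for $\mu$-almost every $x\in X$ there exist $\mathbf z\in\mathfrak d_+$ with $\|\mathbf z\|$ arbitrarily large such that $\Delta(f_{\mathbf z}(x))\ge r(\|\mathbf z\|)$. Consequently, for $\mu$-almost every $x$, $$\limsup_{\mathbf z\in\mathfrak d_+,\ \mathbf z\to\infty}\frac{\Delta(f_{\mathbf z}(x))}{\log\|\mathbf z\|}\ge\frac dk.$$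
   Context: Distance between self-maps: $\sup_x\mathrm{dist}_X(f_1(x),f_2(x))$. $\Phi_\Delta(z)=\mu(\{x:\Delta(x)\ge z\})$; $\Delta$ is $k$-DL if uniformly continuous and $C_1e^{-kz}\le\Phi_\Delta(z)\le C_2e^{-kz}$ for all $z\ge0$, some $C_1,C_2>0$. $r$ is quasi-increasing if for some $C$, $r(t_2)>r(t_1)-C$ whenever $t_1\le t_2<t_1+1$. $\mathcal B(\Delta)=\{\{x:\Delta(x)\ge s\}:s\in\mathbb R\}$. For a countable family $F=\{f_i\}_{i\in I}$ of $\mu$-preserving maps, $\mathcal B$ is Borel–Cantelli for $F$ if for every family $\{A_i\}_{i\in I}$ of sets in $\mathcal B$, $\{x: f_i(x)\in A_i$ for infinitely many $i\}$ has measure $0$ when $\sum_i\mu(A_i)<\infty$ and measure $1$ when $\sum_i\mu(A_i)=\infty$. *)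

theory Defs
  imports "HOL-Probability.Probability"
begin

definition pos_cone :: "'v::real_vector set \<Rightarrow> bool" where
  "pos_cone C \<longleftrightarrow> (\<forall>z\<in>C. \<forall>t::real. t > 0 \<longrightarrow> t *\<^sub>R z \<in> C)"

definition meas_pres :: "'a measure \<Rightarrow> ('a \<Rightarrow> 'a) \<Rightarrow> bool" where
  "meas_pres M f \<longleftrightarrow> f \<in> M \<rightarrow>\<^sub>M M \<and> distr M M f = M"

definition map_dist :: "('a::metric_space \<Rightarrow> 'a) \<Rightarrow> ('a \<Rightarrow> 'a) \<Rightarrow> ereal" where
  "map_dist f1 f2 = (SUP x. ereal (dist (f1 x) (f2 x)))"

definition Phi :: "'a measure \<Rightarrow> ('a \<Rightarrow> real) \<Rightarrow> real \<Rightarrow> real" where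
  "Phi M \<Delta> z = measure M {x\<in>space M. \<Delta> x \<ge> z}"

definition kDL :: "'a::metric_space measure \<Rightarrow> nat \<Rightarrow> ('a \<Rightarrow> real) \<Rightarrow> bool" where
  "kDL M k \<Delta> \<longleftrightarrow> uniformly_continuous_on UNIV \<Delta> \<and>
     (\<exists>C1>0. \<exists>C2>0. \<forall>z\<ge>0. C1 * exp (- real k * z) \<le> Phi M \<Delta> z \<and>
                              Phi M \<Delta> z \<le> C2 * exp (- real k * z))"

definition quasi_increasing :: "real \<Rightarrow> (real \<Rightarrow> real) \<Rightarrow> bool" where
  "quasi_increasing t0 r \<longleftrightarrow> (\<exists>C. \<forall>t1 t2. t0 \<le> t1 \<longrightarrow> t1 \<le> t2 \<longrightarrow> t2 < t1 + 1 \<longrightarrow> r t2 > r t1 - C)"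

definition is_lattice :: "(real ^ 'n) set \<Rightarrow> bool" where
  "is_lattice L \<longleftrightarrow> (\<exists>A :: real ^ 'n ^ 'n. invertible A \<and>
      L = (\<lambda>m::'n \<Rightarrow> int. A *v (\<chi> i. real_of_int (m i))) ` UNIV)"

definition borel_cantelli :: "'a measure \<Rightarrow> ('a \<Rightarrow> real) \<Rightarrow> 'i set \<Rightarrow> ('i \<Rightarrow> 'a \<Rightarrow> 'a) \<Rightarrow> bool" where
  "borel_cantelli M \<Delta> I f \<longleftrightarrow>
     (\<forall>s :: 'i \<Rightarrow> real.
        let A = (\<lambda>i. {x\<in>space M. \<Delta> x \<ge> s i});
            E = {x\<in>space M. infinite {i\<in>I. f i x \<in> A i}};
            S = (\<integral>\<^sup>+ i. emeasure M (A i) \<partial>count_space I)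
        in (S < \<infinity> \<longrightarrow> emeasure M E = 0) \<and> (S = \<infinity> \<longrightarrow> emeasure M E = 1))"

end

theory Submission
  imports Defs
begin
lemma qi_chain:
  fixes r :: "real \<Rightarrow> real"
  assumes C0: "C \<ge> 0" and q: "\<And>t1 t2. t0 \<le> t1 \<Longrightarrow> t1 \<le> t2 \<Longrightarrow> t2 < t1 + 1 \<Longrightarrow> r t2 > r t1 - C"
  shows "n \<ge> 1 \<Longrightarrow> t0 \<le> t1 \<Longrightarrow> t1 \<le> t2 \<Longrightarrow> t2 < t1 + real n \<Longrightarrow> r t2 > r t1 - real n * C"
proof (induction n arbitrary: t2)
  case 0 then show ?case by simp
next
  case (Suc n)
  show ?case
  proof (cases "n = 0")
    case True then show ?thesis using Suc q by simp
  next
    case False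
    define t' where "t' = t1 + (t2 - t1) * real n / real (Suc n)"
    have n1: "n \<ge> 1" using False by simp
    have a: "t1 \<le> t'" using Suc.prems unfolding t'_def by (simp add: divide_nonneg_nonneg)
    have b: "t' < t1 + real n"
    proof -
      have "(t2 - t1) * real n / real (Suc n) < real n"
        using Suc.prems n1 by (simp add: divide_less_eq)
      then show ?thesis unfolding t'_def by simp
    qed
    have c: "t' \<le> t2"
    proof -
      have "(t2 - t1) * (real n / real (Suc n)) \<le> (t2 - t1) * 1"
        using Suc.prems by (intro mult_left_mono) auto
      then show ?thesis unfolding t'_def by simp
    qed
    have d: "t2 < t' + 1"
    proof -
      have "t2 - t' = (t2 - t1) / real (Suc n)" unfolding t'_def by (simp add: field_simps)
      also have "\<dots> < 1" using Suc.prems by (simp add: divide_less_eq)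
      finally show ?thesis by simp
    qed
    have "r t' > r t1 - real n * C" using Suc.IH[OF n1 Suc.prems(2) a b] .
    moreover have "r t2 > r t' - C" using q[OF _ c d] a Suc.prems(2) by simp
    ultimately show ?thesis by (simp add: algebra_simps)
  qed
qed

lemma min_div:
  fixes a :: "nat \<Rightarrow> real"
  assumes nn: "\<And>m. a m \<ge> 0" and inf: "(\<Sum>m. ennreal (a m)) = \<infinity>"
  shows "(\<Sum>m. ennreal (min 1 (a (m + m0)))) = \<infinity>"
proof (rule ccontr)
  assume "(\<Sum>m. ennreal (min 1 (a (m + m0)))) \<noteq> \<infinity>"
  then have s: "summable (\<lambda>m. min 1 (a (m + m0)))"
    by (intro summable_suminf_not_top) (auto simp: nn)
  then have "(\<lambda>m. min 1 (a (m + m0))) \<longlonglongrightarrow> 0" by (rule summable_LIMSEQ_zero)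
  then have "eventually (\<lambda>m. min 1 (a (m + m0)) < 1) sequentially"
    by (rule order_tendstoD) simp
  then have "eventually (\<lambda>m. min 1 (a (m + m0)) = a (m + m0)) sequentially"
    by eventually_elim auto
  then have "summable (\<lambda>m. a (m + m0))" using s summable_cong by fastforce
  then have "summable a" by (simp add: summable_iff_shift)
  then have "(\<Sum>m. ennreal (a m)) = ennreal (suminf a)" by (intro suminf_ennreal2) (auto simp: nn)
  then show False using inf by simp
qed

lemma ennreal_le_suminf_term:
  fixes f :: "nat \<Rightarrow> ennreal"
  shows "f m \<le> (\<Sum>i. f i)"
  using sum_le_suminf[of f "{m}"] by (simp add: summableI)

lemma int_to_series:
  fixes r :: "real \<Rightarrow> real" and k d L :: nat
  assumes C0: "C \<ge> 0" and q: "\<And>t1 t2. t0 \<le> t1 \<Longrightarrow> t1 \<le> t2 \<Longrightarrow> t2 < t1 + 1 \<Longrightarrow> r t2 > r t1 - C"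
    and L1: "L \<ge> 1"
    and div: "(\<integral>\<^sup>+ t\<in>{t0..}. ennreal (t ^ d * exp (- real k * r t)) \<partial>lborel) = \<infinity>"
  shows "(\<Sum>m. ennreal ((\<bar>t0 + real L * real m\<bar> + real L) ^ d * exp (- real k * r (t0 + real L * real m)))) = \<infinity>"
proof -
  define u where "u m = t0 + real L * real m" for m
  define a where "a m = (\<bar>u m\<bar> + real L) ^ d * exp (- real k * r (u m))" for m
  define E where "E = exp (real k * real L * C)"
  have Epos: "E > 0" unfolding E_def by simp
  have Lpos: "real L > 0" using L1 by simp
  have pw: "ennreal (t ^ d * exp (- real k * r t)) * indicator {t0..} t
      \<le> (\<Sum>m. ennreal (E * a m) * indicator {u m..<u m + real L} t)" for t
  proof (cases "t0 \<le> t")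
    case False then show ?thesis by simp
  next
    case True
    define m where "m = nat \<lfloor>(t - t0) / real L\<rfloor>"
    have fl: "real m \<le> (t - t0) / real L" "(t - t0) / real L < real m + 1"
      unfolding m_def using True Lpos by (auto simp: divide_nonneg_nonneg)
    have um: "u m \<le> t" "t < u m + real L"
    proof -
      have "real L * real m \<le> t - t0" using fl(1) Lpos by (simp add: le_divide_eq mult.commute)
      then show "u m \<le> t" unfolding u_def by simp
      have "t - t0 < real L * (real m + 1)" using fl(2) Lpos by (simp add: divide_less_eq mult.commute)
      then show "t < u m + real L" unfolding u_def by (simp add: algebra_simps)
    qed
    have um0: "t0 \<le> u m" unfolding u_def by simp
    have rr: "r t > r (u m) - real L * C"
      using qi_chain[of C t0 r L "u m" t, OF C0 q L1 um0 um(1) um(2)] by simp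
    have e1: "exp (- real k * r t) \<le> E * exp (- real k * r (u m))"
    proof -
      have "real k * (r (u m) - r t) \<le> real k * (real L * C)"
        by (rule mult_left_mono) (use rr in auto)
      then have "- real k * r t \<le> real k * real L * C + - real k * r (u m)"
        by (simp add: algebra_simps)
      then have "exp (- real k * r t) \<le> exp (real k * real L * C + - real k * r (u m))" by simp
      then show ?thesis unfolding E_def by (simp add: exp_add[symmetric])
    qed
    have e2: "t ^ d \<le> (\<bar>u m\<bar> + real L) ^ d"
    proof -
      have "t ^ d \<le> \<bar>t\<bar> ^ d" by (metis abs_ge_self power_abs abs_le_D1 order.refl)
      also have "\<dots> \<le> (\<bar>u m\<bar> + real L) ^ d" using um by (intro power_mono) auto
      finally show ?thesis .
    qed
    have "t ^ d * exp (- real k * r t) \<le> (\<bar>u m\<bar> + real L) ^ d * (E * exp (- real k * r (u m)))"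
      using e1 e2 by (intro mult_mono) auto
    then have "t ^ d * exp (- real k * r t) \<le> E * a m"
      unfolding a_def by (simp add: mult.left_commute)
    then have "ennreal (t ^ d * exp (- real k * r t)) * indicator {t0..} t \<le> ennreal (E * a m) * indicator {u m..<u m + real L} t"
      using True um by (simp add: indicator_def ennreal_leI)
    also have "\<dots> \<le> (\<Sum>m. ennreal (E * a m) * indicator {u m..<u m + real L} t)"
      by (rule ennreal_le_suminf_term)
    finally show ?thesis .
  qed
  have "\<infinity> = (\<integral>\<^sup>+ t. ennreal (t ^ d * exp (- real k * r t)) * indicator {t0..} t \<partial>lborel)"
    using div by simp
  also have "\<dots> \<le> (\<integral>\<^sup>+ t. (\<Sum>m. ennreal (E * a m) * indicator {u m..<u m + real L} t) \<partial>lborel)"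
    by (intro nn_integral_mono pw)
  also have "\<dots> = (\<Sum>m. \<integral>\<^sup>+ t. ennreal (E * a m) * indicator {u m..<u m + real L} t \<partial>lborel)"
    by (intro nn_integral_suminf) simp
  also have "\<dots> = (\<Sum>m. ennreal (E * a m) * ennreal (real L))"
    using Lpos by (simp add: nn_integral_cmult_indicator)
  also have "\<dots> = ennreal E * (\<Sum>m. ennreal (a m)) * ennreal (real L)"
    unfolding ennreal_suminf_multc[symmetric] ennreal_suminf_cmult[symmetric]
    using Epos by (simp add: ennreal_mult a_def)
  finally have "ennreal E * (\<Sum>m. ennreal (a m)) * ennreal (real L) = \<infinity>" by (simp add: top_unique)
  then have "(\<Sum>m. ennreal (a m)) = \<infinity>" by (auto simp: ennreal_mult_eq_top_iff)
  then show ?thesis unfolding a_def u_def .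
qed

definition iv :: "('n::finite \<Rightarrow> int) \<Rightarrow> real ^ 'n" where
  "iv m = (\<chi> j. real_of_int (m j))"

lemma iv_nth[simp]: "iv m $ j = real_of_int (m j)"
  by (simp add: iv_def)

lemma iv_inj: "iv m = iv m' \<Longrightarrow> m = m'"
  by (auto simp: vec_eq_iff fun_eq_iff)

lemma lattice_finite_ball:
  fixes A :: "real ^ 'n ^ 'n"
  assumes inv: "invertible A"
  shows "finite {i \<in> range (\<lambda>m::'n \<Rightarrow> int. A *v (\<chi> j. real_of_int (m j))). norm i \<le> R}"
proof -
  obtain B where AB: "A ** B = mat 1" "B ** A = mat 1" using inv unfolding invertible_def by blast
  obtain K where K: "K > 0" "\<And>x. norm (B *v x) \<le> norm x * K"
    using bounded_linear.pos_bounded[OF matrix_vector_mul_bounded_linear[of B]] by blast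
  define N where "N = \<lceil>R * K\<rceil>"
  have "{i \<in> range (\<lambda>m::'n \<Rightarrow> int. A *v (\<chi> j. real_of_int (m j))). norm i \<le> R}
        \<subseteq> (\<lambda>m::'n \<Rightarrow> int. A *v (\<chi> j. real_of_int (m j))) ` (Pi\<^sub>E UNIV (\<lambda>_. {-N..N}))"
  proof
    fix i assume "i \<in> {i \<in> range (\<lambda>m::'n \<Rightarrow> int. A *v (\<chi> j. real_of_int (m j))). norm i \<le> R}"
    then obtain m where m: "i = A *v (\<chi> j. real_of_int (m j))" "norm i \<le> R" by auto
    have y: "B *v i = (\<chi> j. real_of_int (m j))" using m(1) AB(2)
      by (simp add: matrix_vector_mul_assoc)
    have mj: "\<bar>real_of_int (m j)\<bar> \<le> R * K" for j
    proof -
      have "\<bar>real_of_int (m j)\<bar> = \<bar>(B *v i) $ j\<bar>" using y by simp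
      also have "\<dots> \<le> norm (B *v i)" by (rule component_le_norm_cart)
      also have "\<dots> \<le> norm i * K" by (rule K(2))
      also have "\<dots> \<le> R * K" using m(2) K(1) by (intro mult_right_mono) auto
      finally show ?thesis .
    qed
    have "\<bar>m j\<bar> \<le> N" for j
    proof -
      have "real_of_int \<bar>m j\<bar> \<le> R * K" using mj[of j] by simp
      also have "\<dots> \<le> real_of_int N" unfolding N_def by (rule le_of_int_ceiling)
      finally show ?thesis by linarith
    qed
    then have "m \<in> Pi\<^sub>E UNIV (\<lambda>_. {-N..N})" unfolding PiE_UNIV_domain
      by (auto simp: abs_le_iff) (metis minus_le_iff)
    then show "i \<in> (\<lambda>m::'n \<Rightarrow> int. A *v (\<chi> j. real_of_int (m j))) ` (Pi\<^sub>E UNIV (\<lambda>_. {-N..N}))"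
      using m(1) by blast
  qed
  moreover have "finite (Pi\<^sub>E (UNIV::'n set) (\<lambda>_. {-N..N}))" by (intro finite_PiE) auto
  ultimately show ?thesis using finite_subset by blast
qed

lemma int_interval_card:
  fixes x R :: real
  assumes "R \<ge> 1"
  shows "R \<le> real (card {\<lceil>x - R\<rceil>..\<lfloor>x + R\<rfloor>})"
proof -
  have "\<lceil>x - R\<rceil> < x - R + 1" "x + R - 1 < \<lfloor>x + R\<rfloor>" by linarith+
  then have "R \<le> real_of_int (\<lfloor>x + R\<rfloor> - \<lceil>x - R\<rceil> + 1)" using assms by simp linarith
  moreover have "\<lfloor>x + R\<rfloor> - \<lceil>x - R\<rceil> + 1 \<ge> 0" using \<open>R \<le> _\<close> assms by linarith
  ultimately show ?thesis by simp
qed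

lemma cone_lattice_count:
  fixes C :: "(real ^ 'n) set" and A :: "real ^ 'n ^ 'n"
  assumes inv: "invertible A"
    and C_ne: "C \<noteq> {}" and C_open: "open C" and C_cone: "pos_cone C"
    and C_add: "\<And>z w. z \<in> C \<Longrightarrow> w \<in> C \<Longrightarrow> z + w \<in> C"
  shows "\<exists>L::nat. L \<ge> 1 \<and> (\<exists>c>0. \<exists>U\<ge>0. \<forall>u\<ge>U. \<exists>H. finite H \<and>
           H \<subseteq> C \<inter> range (\<lambda>m::'n \<Rightarrow> int. A *v (\<chi> j. real_of_int (m j))) \<and>
           (\<forall>i\<in>H. u - real L < norm i \<and> norm i \<le> u) \<and>
           c * (u + real L) ^ (CARD('n) - 1) \<le> real (card H))"
proof -
  define d where "d = CARD('n)"
  have d1: "d \<ge> 1" unfolding d_def by (simp add: Suc_le_eq)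
  obtain B where AB: "A ** B = mat 1" "B ** A = mat 1" using inv unfolding invertible_def by blast
  have ABx: "A *v (B *v x) = x" for x using AB(1) by (simp add: matrix_vector_mul_assoc)
  have BAx: "B *v (A *v x) = x" for x using AB(2) by (simp add: matrix_vector_mul_assoc)
  define Cp where "Cp = {y. A *v y \<in> C}"
  have Cp_open: "open Cp"
  proof -
    have "Cp = (*v) A -` C" unfolding Cp_def by auto
    also have "open \<dots>"
      by (intro open_vimage C_open linear_continuous_on matrix_vector_mul_bounded_linear)
    finally show ?thesis .
  qed
  have Cp_cone: "t *\<^sub>R y \<in> Cp" if "y \<in> Cp" "t > 0" for y t
    using that C_cone unfolding Cp_def pos_cone_def by (simp add: matrix_vector_mult_scaleR)
  have Cp_add: "y + z \<in> Cp" if "y \<in> Cp" "z \<in> Cp" for y z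
    using that C_add unfolding Cp_def by (simp add: matrix_vector_right_distrib)
  obtain z0 where "z0 \<in> C" using C_ne by blast
  then have y0: "B *v z0 \<in> Cp" unfolding Cp_def by (simp add: ABx)
  obtain p where p: "p \<in> Cp" "p \<noteq> 0"
  proof -
    obtain e where e: "e > 0" "ball (B *v z0) e \<subseteq> Cp" using Cp_open y0 open_contains_ball by blast
    show ?thesis
    proof (cases "B *v z0 = 0")
      case False then show ?thesis using that y0 by blast
    next
      case True
      fix j :: 'n
      have "(e/2) *\<^sub>R axis j 1 \<in> ball (B *v z0) e" using True e(1)
        by (simp add: dist_norm norm_axis_1)
      moreover have "(e/2) *\<^sub>R axis j (1::real) \<noteq> 0" using e(1) by (simp add: vec_eq_iff axis_def)
      ultimately show ?thesis using that e(2) by blast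
    qed
  qed
  obtain \<rho> where \<rho>: "\<rho> > 0" "\<And>y. (\<forall>j. \<bar>y $ j - p $ j\<bar> \<le> \<rho>) \<Longrightarrow> y \<in> Cp"
  proof -
    obtain e where e: "e > 0" "ball p e \<subseteq> Cp" using Cp_open p(1) open_contains_ball by blast
    define \<rho> where "\<rho> = e / (2 * real d)"
    have "\<rho> > 0" unfolding \<rho>_def using e d1 by simp
    moreover have "y \<in> Cp" if "\<forall>j. \<bar>y $ j - p $ j\<bar> \<le> \<rho>" for y
    proof -
      have "norm (y - p) \<le> (\<Sum>j\<in>UNIV. \<bar>(y - p) $ j\<bar>)" by (rule norm_le_l1_cart)
      also have "\<dots> \<le> (\<Sum>j\<in>(UNIV::'n set). \<rho>)" using that by (intro sum_mono) simp
      also have "\<dots> = e / 2" unfolding \<rho>_def d_def using d1 d_def by simp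
      also have "\<dots> < e" using e by simp
      finally have "y \<in> ball p e" by (simp add: dist_norm norm_minus_commute)
      then show ?thesis using e by blast
    qed
    ultimately show ?thesis using that by blast
  qed
  have cube: "y \<in> Cp" if "s > 0" "\<forall>j. \<bar>y $ j - s * p $ j\<bar> \<le> s * \<rho>" for s y
  proof -
    have "\<bar>((1/s) *\<^sub>R y) $ j - p $ j\<bar> \<le> \<rho>" for j
    proof -
      have "\<bar>((1/s) *\<^sub>R y) $ j - p $ j\<bar> = \<bar>y $ j - s * p $ j\<bar> / s"
        using that(1) by (simp add: field_simps abs_div)
      also have "\<dots> \<le> \<rho>" using that by (simp add: divide_le_eq mult.commute)
      finally show ?thesis .
    qed
    then have "(1/s) *\<^sub>R y \<in> Cp" using \<rho>(2) by blast
    from Cp_cone[OF this that(1)] show ?thesis using that(1) by simp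
  qed
  obtain j0 where j0: "p $ j0 \<noteq> 0" using p(2) by (metis vec_eq_iff zero_index)
  define s1 where "s1 = max (1/\<rho>) (2/\<bar>p $ j0\<bar>)"
  have s1pos: "s1 > 0" unfolding s1_def using \<rho>(1) by (simp add: less_max_iff_disj)
  have s1r: "s1 * \<rho> \<ge> 1"
  proof -
    have "s1 \<ge> 1/\<rho>" unfolding s1_def by simp
    then show ?thesis using \<rho>(1) by (simp add: divide_le_eq)
  qed
  have s1p: "\<bar>s1 * p $ j0\<bar> \<ge> 2"
  proof -
    have "s1 \<ge> 2/\<bar>p $ j0\<bar>" unfolding s1_def by simp
    then have "s1 * \<bar>p $ j0\<bar> \<ge> 2" using j0 by (simp add: divide_le_eq)
    then show ?thesis using s1pos by (simp add: abs_mult)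
  qed
  define vm where "vm j = \<lfloor>s1 * p $ j\<rfloor>" for j
  define v where "v = iv vm"
  have v_Cp: "v \<in> Cp"
  proof (rule cube[OF s1pos], intro allI)
    fix j
    have "\<bar>v $ j - s1 * p $ j\<bar> < 1" unfolding v_def vm_def by simp linarith
    then show "\<bar>v $ j - s1 * p $ j\<bar> \<le> s1 * \<rho>" using s1r by simp
  qed
  have vj0: "v $ j0 \<noteq> 0"
  proof
    assume "v $ j0 = 0"
    then have "vm j0 = 0" unfolding v_def by simp
    then have "0 \<le> s1 * p $ j0" "s1 * p $ j0 < 1" unfolding vm_def by linarith+
    then show False using s1p by simp
  qed
  have nv_Cp: "real n *\<^sub>R v \<in> Cp" if "n \<ge> 1" for n
    using Cp_cone[OF v_Cp] that by simp
  obtain \<beta> where \<beta>: "\<beta> > 0" "\<And>x. norm (A *v x) \<le> norm x * \<beta>"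
    using bounded_linear.pos_bounded[OF matrix_vector_mul_bounded_linear[of A]] by blast
  have Av0: "A *v v \<noteq> 0"
  proof
    assume "A *v v = 0"
    then have "v = 0" using BAx[of v] by simp
    then show False using vj0 by simp
  qed
  define L where "L = nat \<lceil>norm (A *v v)\<rceil> + 1"
  have L1: "L \<ge> 1" unfolding L_def by simp
  have AvL: "norm (A *v v) \<le> real L" unfolding L_def by linarith
  define D where "D = norm p + real d * \<rho>"
  have Dpos: "D > 0" unfolding D_def using \<rho>(1) d1 by (simp add: add_nonneg_pos)
  define c where "c = (\<rho> / (2 * \<beta> * D)) ^ (d - 1)"
  have cpos: "c > 0" unfolding c_def using \<rho>(1) \<beta>(1) Dpos by simp
  define U where "U = max (3 * real L) (real L + \<beta> * D / \<rho>)"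
  have U0: "U \<ge> 0" unfolding U_def by simp
  have main: "\<exists>H. finite H \<and>
           H \<subseteq> C \<inter> range (\<lambda>m::'n \<Rightarrow> int. A *v (\<chi> j. real_of_int (m j))) \<and>
           (\<forall>i\<in>H. u - real L < norm i \<and> norm i \<le> u) \<and>
           c * (u + real L) ^ (CARD('n) - 1) \<le> real (card H)" if uU: "u \<ge> U" for u
  proof -
    have u3: "u \<ge> 3 * real L" and u2: "u - real L \<ge> \<beta> * D / \<rho>" using uU unfolding U_def by auto
    define s where "s = (u - real L) / (\<beta> * D)"
    have sr: "s * \<rho> \<ge> 1"
    proof -
      have "\<beta> * D \<le> (u - real L) * \<rho>" using u2 \<rho>(1) by (simp add: divide_le_eq)
      then show ?thesis unfolding s_def using \<beta>(1) Dpos by (simp add: field_simps)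
    qed
    have spos: "s > 0" using sr \<rho>(1) by (smt (verit) mult_nonpos_nonneg)
    have sD: "s * \<beta> * D = u - real L" unfolding s_def using \<beta>(1) Dpos by simp
    define I where "I j = (if j = j0 then {\<lfloor>s * p $ j0\<rfloor>} else {\<lceil>s * p $ j - s * \<rho>\<rceil>..\<lfloor>s * p $ j + s * \<rho>\<rfloor>})" for j
    define Bs where "Bs = Pi\<^sub>E UNIV I"
    have mI: "m j \<in> I j" if "m \<in> Bs" for m j
      using that unfolding Bs_def by (auto simp: PiE_iff)
    have mj0: "m j0 = \<lfloor>s * p $ j0\<rfloor>" if "m \<in> Bs" for m
      using mI[OF that, of j0] unfolding I_def by simp
    have inBs: "\<bar>real_of_int (m j) - s * p $ j\<bar> \<le> s * \<rho>" if "m \<in> Bs" for m j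
    proof (cases "j = j0")
      case True
      then have "m j = \<lfloor>s * p $ j0\<rfloor>" using mj0[OF that] by simp
      then have "\<bar>real_of_int (m j) - s * p $ j\<bar> < 1" using True by simp linarith
      then show ?thesis using sr by simp
    next
      case False
      then have "m j \<in> {\<lceil>s * p $ j - s * \<rho>\<rceil>..\<lfloor>s * p $ j + s * \<rho>\<rfloor>}" using mI[OF that, of j] unfolding I_def by simp
      then show ?thesis by (simp add: abs_le_iff) linarith
    qed
    have Bs_Cp: "iv m \<in> Cp" if "m \<in> Bs" for m
      using cube[OF spos] inBs[OF that] by simp
    have Bs_norm: "norm (A *v iv m) \<le> u - real L" if "m \<in> Bs" for m
    proof -
      have "norm (iv m - s *\<^sub>R p) \<le> (\<Sum>j\<in>UNIV. \<bar>(iv m - s *\<^sub>R p) $ j\<bar>)" by (rule norm_le_l1_cart)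
      also have "\<dots> \<le> (\<Sum>j\<in>(UNIV::'n set). s * \<rho>)" using inBs[OF that] by (intro sum_mono) simp
      also have "\<dots> = real d * s * \<rho>" unfolding d_def by simp
      finally have 1: "norm (iv m - s *\<^sub>R p) \<le> real d * s * \<rho>" .
      have "norm (iv m) \<le> norm (s *\<^sub>R p) + norm (iv m - s *\<^sub>R p)" by (rule norm_triangle_sub)
      also have "\<dots> \<le> s * norm p + real d * s * \<rho>" using 1 spos by simp
      also have "\<dots> = s * D" unfolding D_def by (simp add: algebra_simps)
      finally have 2: "norm (iv m) \<le> s * D" .
      have "norm (A *v iv m) \<le> norm (iv m) * \<beta>" by (rule \<beta>(2))
      also have "\<dots> \<le> s * D * \<beta>" using 2 \<beta>(1) by (intro mult_right_mono) auto
      also have "\<dots> = u - real L" using sD by (simp add: algebra_simps)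
      finally show ?thesis .
    qed
    define g where "g m n = norm (A *v (real n *\<^sub>R v + iv m))" for m n
    have g_lb: "g m n \<ge> real n * norm (A *v v) - norm (A *v iv m)" for m n
    proof -
      have "A *v (real n *\<^sub>R v + iv m) = real n *\<^sub>R (A *v v) + A *v iv m"
        by (simp add: matrix_vector_right_distrib matrix_vector_mult_scaleR)
      moreover have "norm (real n *\<^sub>R (A *v v) + A *v iv m) \<ge> norm (real n *\<^sub>R (A *v v)) - norm (A *v iv m)"
        by (rule norm_diff_ineq)
      ultimately show ?thesis unfolding g_def by simp
    qed
    have g_step: "g m (Suc n) \<le> g m n + norm (A *v v)" for m n
    proof -
      have "A *v (real (Suc n) *\<^sub>R v + iv m) = A *v (real n *\<^sub>R v + iv m) + A *v v"
        by (simp add: matrix_vector_right_distrib matrix_vector_mult_scaleR algebra_simps)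
      then show ?thesis unfolding g_def by (simp add: norm_triangle_ineq)
    qed
    have g_ex: "\<exists>n. g m n > u - real L" for m
    proof -
      have nAv: "norm (A *v v) > 0" using Av0 by simp
      define n where "n = nat \<lceil>(u - real L + norm (A *v iv m)) / norm (A *v v)\<rceil> + 1"
      have "(u - real L + norm (A *v iv m)) / norm (A *v v) < real n" unfolding n_def by linarith
      then have "u - real L + norm (A *v iv m) < real n * norm (A *v v)" using nAv by (simp add: divide_less_eq)
      then show ?thesis using g_lb[of n m] by (intro exI[of _ n]) linarith
    qed
    define N where "N m = (LEAST n. g m n > u - real L)" for m
    have N1: "g m (N m) > u - real L" for m unfolding N_def by (rule LeastI_ex[OF g_ex])
    have N0: "N m \<ge> 1" if "m \<in> Bs" for m
    proof (rule ccontr)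
      assume "\<not> N m \<ge> 1"
      then have "N m = 0" by simp
      then have "g m 0 > u - real L" using N1[of m] by simp
      moreover have "g m 0 = norm (A *v iv m)" unfolding g_def by simp
      ultimately show False using Bs_norm[OF that] by simp
    qed
    have N2: "g m (N m) \<le> u" if mB: "m \<in> Bs" for m
    proof -
      obtain n where n: "N m = Suc n" using N0[OF mB] by (cases "N m") auto
      have "\<not> g m n > u - real L" unfolding N_def using n not_less_Least[of n "\<lambda>n. g m n > u - real L"]
        by (simp add: N_def)
      then have "g m n \<le> u - real L" by simp
      then show ?thesis using g_step[of m n] n AvL by simp
    qed
    define P where "P m = A *v (real (N m) *\<^sub>R v + iv m)" for m
    define H where "H = P ` Bs"
    have Bs_fin: "finite Bs" unfolding Bs_def by (intro finite_PiE) (auto simp: I_def)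
    have H_fin: "finite H" unfolding H_def using Bs_fin by simp
    have H_C: "H \<subseteq> C"
    proof
      fix i assume "i \<in> H"
      then obtain m where m: "m \<in> Bs" "i = P m" unfolding H_def by blast
      have "real (N m) *\<^sub>R v + iv m \<in> Cp" using Cp_add[OF nv_Cp[OF N0[OF m(1)]] Bs_Cp[OF m(1)]] .
      then show "i \<in> C" using m(2) unfolding P_def Cp_def by simp
    qed
    have H_lat: "H \<subseteq> range (\<lambda>m::'n \<Rightarrow> int. A *v (\<chi> j. real_of_int (m j)))"
    proof
      fix i assume "i \<in> H"
      then obtain m where m: "m \<in> Bs" "i = P m" unfolding H_def by blast
      have "real (N m) *\<^sub>R v + iv m = (\<chi> j. real_of_int (int (N m) * vm j + m j))"
        unfolding v_def by (simp add: vec_eq_iff)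
      then have "i = A *v (\<chi> j. real_of_int (int (N m) * vm j + m j))"
        using m(2) unfolding P_def by simp
      then show "i \<in> range (\<lambda>m::'n \<Rightarrow> int. A *v (\<chi> j. real_of_int (m j)))"
        by (rule image_eqI[where x="\<lambda>j. int (N m) * vm j + m j"]) simp
    qed
    have H_norm: "\<forall>i\<in>H. u - real L < norm i \<and> norm i \<le> u"
      using N1 N2 unfolding H_def P_def g_def by auto
    have inj: "inj_on P Bs"
    proof
      fix m m' assume mm: "m \<in> Bs" "m' \<in> Bs" "P m = P m'"
      have eq: "real (N m) *\<^sub>R v + iv m = real (N m') *\<^sub>R v + iv m'"
        using arg_cong[OF mm(3), of "(*v) B"] unfolding P_def BAx .
      then have "(real (N m) *\<^sub>R v + iv m) $ j0 = (real (N m') *\<^sub>R v + iv m') $ j0" by simp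
      then have "real (N m) * v $ j0 + real_of_int (m j0) = real (N m') * v $ j0 + real_of_int (m' j0)"
        by simp
      then have "real (N m) * v $ j0 = real (N m') * v $ j0" using mj0[OF mm(1)] mj0[OF mm(2)] by simp
      then have "N m = N m'" using vj0 by simp
      then have "iv m = iv m'" using eq by simp
      then show "m = m'" by (rule iv_inj)
    qed
    have cardH: "card H = (\<Prod>j\<in>UNIV. card (I j))"
    proof -
      have "card H = card Bs" unfolding H_def using inj by (rule card_image)
      also have "\<dots> = (\<Prod>j\<in>UNIV. card (I j))" unfolding Bs_def by (rule card_PiE) simp
      finally show ?thesis .
    qed
    have "(s * \<rho>) ^ (d - 1) \<le> real (card H)"
    proof -
      have "(\<Prod>j\<in>UNIV. (if j = j0 then 1 else s * \<rho>)) \<le> (\<Prod>j\<in>UNIV. real (card (I j)))"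
      proof (intro prod_mono conjI)
        fix j :: 'n
        show "0 \<le> (if j = j0 then 1 else s * \<rho>)" using spos \<rho>(1) by simp
        show "(if j = j0 then 1 else s * \<rho>) \<le> real (card (I j))"
          using int_interval_card[OF sr, of "s * p $ j"] unfolding I_def by simp
      qed
      moreover have "(\<Prod>j\<in>UNIV. (if j = j0 then 1 else s * \<rho>)) = (s * \<rho>) ^ (d - 1)"
      proof -
        have "(\<Prod>j\<in>UNIV. (if j = j0 then 1 else s * \<rho>)) = (if j0 = j0 then 1 else s * \<rho>) * (\<Prod>j\<in>UNIV - {j0}. (if j = j0 then 1 else s * \<rho>))"
          by (rule prod.remove) auto
        also have "\<dots> = (\<Prod>j\<in>UNIV - {j0}. (if j = j0 then 1 else s * \<rho>))" by simp
        also have "\<dots> = (\<Prod>j\<in>UNIV - {j0}. s * \<rho>)" by (rule prod.cong) auto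
        also have "\<dots> = (s * \<rho>) ^ (d - 1)" unfolding d_def by (simp add: card_Diff_singleton)
        finally show ?thesis .
      qed
      ultimately show ?thesis unfolding cardH by simp
    qed
    moreover have "c * (u + real L) ^ (d - 1) \<le> (s * \<rho>) ^ (d - 1)"
    proof -
      have "\<rho> / (2 * \<beta> * D) * (u + real L) \<le> s * \<rho>"
      proof -
        have "u + real L \<le> 2 * (u - real L)" using u3 by simp
        then have "\<rho> * (u + real L) \<le> \<rho> * (2 * (u - real L))" using \<rho>(1) by (intro mult_left_mono) auto
        then show ?thesis unfolding s_def using \<beta>(1) Dpos by (simp add: field_simps)
      qed
      then have "(\<rho> / (2 * \<beta> * D) * (u + real L)) ^ (d - 1) \<le> (s * \<rho>) ^ (d - 1)"
        using \<rho>(1) \<beta>(1) Dpos u3 by (intro power_mono) auto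
      then show ?thesis unfolding c_def by (simp only: power_mult_distrib)
    qed
    ultimately have "c * (u + real L) ^ (d - 1) \<le> real (card H)" by linarith
    then show ?thesis using H_fin H_C H_lat H_norm unfolding d_def by blast
  qed
  show ?thesis using L1 cpos U0 main by blast
qed

lemma sum_le_nn_integral_count_space:
  fixes g :: "'i \<Rightarrow> ennreal"
  assumes "finite F" "F \<subseteq> I"
  shows "sum g F \<le> (\<integral>\<^sup>+ i. g i \<partial>count_space I)"
proof -
  have "sum g F = (\<integral>\<^sup>+ i. g i \<partial>count_space F)" using assms(1) by (simp add: nn_integral_count_space_finite)
  also have "\<dots> = (\<integral>\<^sup>+ i. g i * indicator F i \<partial>count_space UNIV)"
    by (cases "F = UNIV") (simp_all add: nn_integral_count_space_indicator)
  also have "\<dots> \<le> (\<integral>\<^sup>+ i. g i * indicator I i \<partial>count_space UNIV)"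
    using assms(2) by (intro nn_integral_mono) (auto simp: indicator_def)
  also have "\<dots> = (\<integral>\<^sup>+ i. g i \<partial>count_space I)"
    by (cases "I = UNIV") (simp_all add: nn_integral_count_space_indicator)
  finally show ?thesis .
qed

lemma first_part:
  fixes M :: "'a::metric_space measure"
    and C :: "(real ^ 'n) set"
    and f :: "real ^ 'n \<Rightarrow> 'a \<Rightarrow> 'a"
    and \<Delta> :: "'a \<Rightarrow> real"
    and k :: nat and t0 :: real and r :: "real \<Rightarrow> real"
    and \<Sigma> :: "(real ^ 'n) set"
  assumes prob: "prob_space M"
    and borel: "sets M = sets borel"
    and C_ne: "C \<noteq> {}" and C_open: "open C" and C_cone: "pos_cone C"
    and C_add: "\<And>z w. z \<in> C \<Longrightarrow> w \<in> C \<Longrightarrow> z + w \<in> C"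
    and DL: "kDL M k \<Delta>"
    and qi: "quasi_increasing t0 r"
    and div: "(\<integral>\<^sup>+ t\<in>{t0..}. ennreal (t ^ (CARD('n) - 1) * exp (- real k * r t)) \<partial>lborel) = \<infinity>"
    and lat: "is_lattice \<Sigma>"
    and BC: "borel_cantelli M \<Delta> (C \<inter> \<Sigma>) f"
  shows "AE x in M. \<forall>R. \<exists>z\<in>C. norm z > R \<and> \<Delta> (f z x) \<ge> r (norm z)"
proof -
  interpret prob_space M by (rule prob)
  define d where "d = CARD('n) - 1"
  obtain A :: "real ^ 'n ^ 'n" where inv: "invertible A"
    and Sig: "\<Sigma> = range (\<lambda>m::'n \<Rightarrow> int. A *v (\<chi> i. real_of_int (m i)))"
    using lat unfolding is_lattice_def by blast
  obtain Cq where Cq: "\<And>t1 t2. t0 \<le> t1 \<Longrightarrow> t1 \<le> t2 \<Longrightarrow> t2 < t1 + 1 \<Longrightarrow> r t2 > r t1 - Cq"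
    using qi unfolding quasi_increasing_def by blast
  define C0 where "C0 = max Cq 0"
  have C00: "C0 \<ge> 0" unfolding C0_def by simp
  have q: "\<And>t1 t2. t0 \<le> t1 \<Longrightarrow> t1 \<le> t2 \<Longrightarrow> t2 < t1 + 1 \<Longrightarrow> r t2 > r t1 - C0"
    using Cq unfolding C0_def by (smt (verit))
  obtain C1 where C1: "C1 > 0" "\<And>z. z \<ge> 0 \<Longrightarrow> C1 * exp (- real k * z) \<le> Phi M \<Delta> z"
    using DL unfolding kDL_def by blast
  have sp: "space M = UNIV" using sets_eq_imp_space_eq[OF borel] by simp
  have Dmeas: "\<Delta> \<in> borel_measurable M"
  proof -
    have "\<Delta> \<in> borel_measurable borel"
      using DL unfolding kDL_def by (intro borel_measurable_continuous_onI uniformly_continuous_imp_continuous) blast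
    then show ?thesis unfolding measurable_cong_sets[OF borel refl] .
  qed
  have setsD: "{x \<in> space M. z \<le> \<Delta> x} \<in> sets M" for z
    using Dmeas by measurable
  have Phi_lb: "C1 * min 1 (exp (- real k * z)) \<le> Phi M \<Delta> z" for z
  proof (cases "z \<ge> 0")
    case True
    then show ?thesis using C1(2)[OF True] C1(1) by (smt (verit) min.cobounded2 mult_left_mono)
  next
    case False
    have "C1 * min 1 (exp (- real k * z)) \<le> C1" using C1(1) by (simp add: mult_left_le)
    also have "\<dots> \<le> Phi M \<Delta> 0" using C1(2)[of 0] by simp
    also have "\<dots> \<le> Phi M \<Delta> z" unfolding Phi_def using False
      by (intro finite_measure_mono setsD) auto
    finally show ?thesis .
  qed
  obtain L :: nat and c U where L1: "L \<ge> 1" and cpos: "c > 0" and U0: "U \<ge> 0"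
    and HU: "\<And>u. u \<ge> U \<Longrightarrow> \<exists>H. finite H \<and> H \<subseteq> C \<inter> \<Sigma> \<and>
           (\<forall>i\<in>H. u - real L < norm i \<and> norm i \<le> u) \<and>
           c * (u + real L) ^ d \<le> real (card H)"
    using cone_lattice_count[OF inv C_ne C_open C_cone C_add] unfolding Sig d_def by blast
  define u where "u m = t0 + real L * real m" for m
  define a where "a m = (\<bar>u m\<bar> + real L) ^ d * exp (- real k * r (u m))" for m
  have a_nn: "a m \<ge> 0" for m unfolding a_def by simp
  have Sa: "(\<Sum>m. ennreal (a m)) = \<infinity>"
    using int_to_series[where d=d and k=k, OF C00 q L1] div unfolding a_def u_def d_def by simp
  define m0 where "m0 = nat \<lceil>\<bar>U - t0\<bar>\<rceil> + 1"
  have um_big: "u (m + m0) \<ge> U" "u (m + m0) \<ge> t0 + real L" for m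
  proof -
    have "real L * real (m + m0) \<ge> 1 * real (m + m0)" using L1 by (intro mult_right_mono) auto
    moreover have "real (m + m0) \<ge> \<bar>U - t0\<bar> + 1" unfolding m0_def by linarith
    ultimately show "u (m + m0) \<ge> U" "u (m + m0) \<ge> t0 + real L" unfolding u_def using L1
      by (auto simp: m0_def)
  qed
  have "\<forall>m. \<exists>H. finite H \<and> H \<subseteq> C \<inter> \<Sigma> \<and>
           (\<forall>i\<in>H. u (m + m0) - real L < norm i \<and> norm i \<le> u (m + m0)) \<and>
           c * (u (m + m0) + real L) ^ d \<le> real (card H)"
    using HU um_big(1) by blast
  then obtain H where H: "\<And>m. finite (H m)" "\<And>m. H m \<subseteq> C \<inter> \<Sigma>"
    "\<And>m i. i \<in> H m \<Longrightarrow> u (m + m0) - real L < norm i \<and> norm i \<le> u (m + m0)"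
    "\<And>m. c * (u (m + m0) + real L) ^ d \<le> real (card (H m))"
    by metis
  define Aset where "Aset i = {x \<in> space M. r (norm i) \<le> \<Delta> x}" for i :: "real ^ 'n"
  define E0 where "E0 = exp (- real k * real L * C0)"
  have E0pos: "E0 > 0" and E01: "E0 \<le> 1" unfolding E0_def using C00 by auto
  define K where "K = c * C1 * E0"
  have Kpos: "K > 0" unfolding K_def using cpos C1(1) E0pos by simp
  have meas_H: "ennreal (C1 * E0 * min 1 (exp (- real k * r (u (m + m0))))) \<le> emeasure M (Aset i)"
    if i: "i \<in> H m" for m i
  proof -
    let ?w = "u (m + m0)"
    have ni: "?w - real L < norm i" "norm i \<le> ?w" using H(3)[OF i] by auto
    have "t0 \<le> norm i" using ni um_big(2)[of m] by simp
    then have rr: "r ?w > r (norm i) - real L * C0"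
      using qi_chain[of C0 t0 r L "norm i" ?w, OF C00 q L1] ni by simp
    have e: "E0 * exp (- real k * r ?w) \<le> exp (- real k * r (norm i))"
    proof -
      have "real k * (r (norm i) - r ?w) \<le> real k * (real L * C0)"
        by (rule mult_left_mono) (use rr in auto)
      then have "- real k * real L * C0 + - real k * r ?w \<le> - real k * r (norm i)"
        by (simp add: algebra_simps)
      then have "exp (- real k * real L * C0 + - real k * r ?w) \<le> exp (- real k * r (norm i))" by simp
      then show ?thesis unfolding E0_def by (simp add: exp_add[symmetric])
    qed
    have "E0 * min 1 (exp (- real k * r ?w)) \<le> min 1 (exp (- real k * r (norm i)))"
      using e E01 E0pos by (smt (verit) min.absorb_iff2 min_def mult_left_le mult_le_cancel_left_pos)
    then have "C1 * E0 * min 1 (exp (- real k * r ?w)) \<le> C1 * min 1 (exp (- real k * r (norm i)))"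
      using C1(1) by (simp add: mult.assoc)
    also have "\<dots> \<le> Phi M \<Delta> (r (norm i))" by (rule Phi_lb)
    also have "\<dots> = measure M (Aset i)" unfolding Phi_def Aset_def by simp
    finally show ?thesis by (simp add: emeasure_eq_measure)
  qed
  have sum_H: "ennreal (K * min 1 (a (m + m0))) \<le> (\<Sum>i\<in>H m. emeasure M (Aset i))" for m
  proof -
    let ?w = "u (m + m0)"
    let ?X = "(?w + real L) ^ d"
    let ?e = "exp (- real k * r ?w)"
    have w0: "?w \<ge> 0" using um_big(1)[of m] U0 by simp
    have X1: "?X \<ge> 1" using w0 L1 by (intro one_le_power) simp
    have aw: "a (m + m0) = ?X * ?e" unfolding a_def using w0 by simp
    have "min 1 (a (m + m0)) \<le> ?X * min 1 ?e"
    proof (cases "?e \<le> 1")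
      case True then show ?thesis using aw by simp
    next
      case False then show ?thesis using X1 by simp
    qed
    then have "(c * C1 * E0) * min 1 (a (m + m0)) \<le> (c * C1 * E0) * (?X * min 1 ?e)"
      using cpos C1(1) E0pos by (intro mult_left_mono) auto
    then have "K * min 1 (a (m + m0)) \<le> c * ?X * (C1 * E0 * min 1 ?e)"
      unfolding K_def by (simp add: ac_simps)
    also have "\<dots> \<le> real (card (H m)) * (C1 * E0 * min 1 ?e)"
      using H(4)[of m] C1(1) E0pos by (intro mult_right_mono) auto
    finally have 1: "ennreal (K * min 1 (a (m + m0))) \<le> ennreal (real (card (H m)) * (C1 * E0 * min 1 ?e))"
      by (rule ennreal_leI)
    also have "\<dots> = (\<Sum>i\<in>H m. ennreal (C1 * E0 * min 1 ?e))"
    proof -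
      have "0 \<le> C1 * E0 * min 1 ?e" using C1(1) E0pos by simp
      then show ?thesis by (simp add: ennreal_mult ennreal_of_nat_eq_real_of_nat)
    qed
    also have "\<dots> \<le> (\<Sum>i\<in>H m. emeasure M (Aset i))"
      by (intro sum_mono meas_H)
    finally show ?thesis .
  qed
  have key: "u (m + m0) \<le> u (m' + m0) - real L" if "m < m'" for m m'
  proof -
    have "real L * (real (m + m0) + 1) \<le> real L * real (m' + m0)"
      using that by (intro mult_left_mono) auto
    then show ?thesis unfolding u_def by (simp add: algebra_simps)
  qed
  have disj: "H m \<inter> H m' = {}" if "m \<noteq> m'" for m m'
  proof (rule ccontr)
    assume "H m \<inter> H m' \<noteq> {}"
    then obtain i where i: "i \<in> H m" "i \<in> H m'" by blast
    show False
    proof (cases "m < m'")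
      case True
      then show False using key[OF True] H(3)[OF i(1)] H(3)[OF i(2)] by linarith
    next
      case False
      then have "m' < m" using that by simp
      then show False using key[OF \<open>m' < m\<close>] H(3)[OF i(1)] H(3)[OF i(2)] by linarith
    qed
  qed
  define S where "S = (\<integral>\<^sup>+ i. emeasure M (Aset i) \<partial>count_space (C \<inter> \<Sigma>))"
  have partial: "(\<Sum>m<N. ennreal (K * min 1 (a (m + m0)))) \<le> S" for N
  proof -
    have "(\<Sum>m<N. ennreal (K * min 1 (a (m + m0)))) \<le> (\<Sum>m<N. \<Sum>i\<in>H m. emeasure M (Aset i))"
      by (intro sum_mono sum_H)
    also have "\<dots> = (\<Sum>i\<in>(\<Union>m<N. H m). emeasure M (Aset i))"
      by (rule sum.UNION_disjoint[symmetric]) (auto simp: H(1) disj)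
    also have "\<dots> \<le> S" unfolding S_def
      by (rule sum_le_nn_integral_count_space) (use H(1,2) in auto)
    finally show ?thesis .
  qed
  have "(\<Sum>m. ennreal (K * min 1 (a (m + m0)))) \<le> S"
    unfolding suminf_eq_SUP by (intro SUP_least partial)
  moreover have "(\<Sum>m. ennreal (K * min 1 (a (m + m0)))) = \<infinity>"
  proof -
    have "(\<Sum>m. ennreal (K * min 1 (a (m + m0)))) = ennreal K * (\<Sum>m. ennreal (min 1 (a (m + m0))))"
    proof -
      have "ennreal (K * min 1 (a (m + m0))) = ennreal K * ennreal (min 1 (a (m + m0)))" for m
        using Kpos a_nn[of "m + m0"] by (simp add: ennreal_mult)
      then show ?thesis by (simp add: ennreal_suminf_cmult)
    qed
    also have "\<dots> = \<infinity>" using min_div[OF a_nn Sa, of m0] Kpos by (simp add: ennreal_mult_eq_top_iff)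
    finally show ?thesis .
  qed
  ultimately have S_inf: "S = \<infinity>" by (simp add: top_unique)
  define Ev where "Ev = {x \<in> space M. infinite {i \<in> C \<inter> \<Sigma>. f i x \<in> Aset i}}"
  have bc: "S = \<infinity> \<longrightarrow> emeasure M Ev = 1"
    using spec[OF BC[unfolded borel_cantelli_def Let_def], of "\<lambda>i. r (norm i)"]
    unfolding S_def Ev_def Aset_def by blast
  have "emeasure M Ev = 1" using bc S_inf by blast
  then have Ev_sets: "Ev \<in> sets M" using emeasure_notin_sets by fastforce
  have "AE x in M. x \<in> Ev"
    using AE_in_set_eq_1[OF Ev_sets] \<open>emeasure M Ev = 1\<close> by (simp add: emeasure_eq_measure)
  then show ?thesis
  proof (rule AE_mp, intro AE_I2 impI allI)
    fix x R assume "x \<in> Ev"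
    then have inf: "infinite {i \<in> C \<inter> \<Sigma>. f i x \<in> Aset i}" unfolding Ev_def by simp
    have fin: "finite {i \<in> \<Sigma>. norm i \<le> R}" unfolding Sig by (rule lattice_finite_ball[OF inv])
    have "\<not> {i \<in> C \<inter> \<Sigma>. f i x \<in> Aset i} \<subseteq> {i \<in> \<Sigma>. norm i \<le> R}"
      using inf fin finite_subset by blast
    then obtain i where "i \<in> C" "i \<in> \<Sigma>" "f i x \<in> Aset i" "\<not> norm i \<le> R" by blast
    then show "\<exists>z\<in>C. R < norm z \<and> r (norm z) \<le> \<Delta> (f z x)" unfolding Aset_def
      by (intro bexI[of _ i]) auto
  qed
qed

lemma harmonic_int: "(\<integral>\<^sup>+ t\<in>{1..}. ennreal (1 / t) \<partial>lborel) = \<infinity>"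
proof -
  have pw: "(\<Sum>m. ennreal (1 / (real m + 2)) * indicator {real m + 1..<real m + 2} t)
      \<le> ennreal (1 / t) * indicator {1..} t" for t :: real
  proof (cases "t \<ge> 1")
    case False
    then have "ennreal (1 / (real m + 2)) * indicator {real m + 1..<real m + 2} t = 0" for m
      by (simp add: indicator_def)
    then show ?thesis by simp
  next
    case True
    define m' where "m' = nat \<lfloor>t\<rfloor> - 1"
    have fl: "real m' + 1 \<le> t" "t < real m' + 2" unfolding m'_def using True by linarith+
    have z: "ennreal (1 / (real m + 2)) * indicator {real m + 1..<real m + 2} t = 0" if "m \<noteq> m'" for m
    proof -
      have "t \<notin> {real m + 1..<real m + 2}"
      proof
        assume "t \<in> {real m + 1..<real m + 2}"
        then have "real m + 1 \<le> t" "t < real m + 2" by auto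
        then have "m = m'" using fl by linarith
        then show False using that by simp
      qed
      then show ?thesis by simp
    qed
    have "(\<Sum>m. ennreal (1 / (real m + 2)) * indicator {real m + 1..<real m + 2} t)
        = (\<Sum>m\<in>{m'}. ennreal (1 / (real m + 2)) * indicator {real m + 1..<real m + 2} t)"
      by (rule suminf_finite) (use z in auto)
    also have "\<dots> = ennreal (1 / (real m' + 2))" using fl by (simp add: indicator_def)
    also have "\<dots> \<le> ennreal (1 / t)" using fl True by (intro ennreal_leI) (simp add: frac_le)
    finally show ?thesis using True by simp
  qed
  have inf: "(\<Sum>m. ennreal (1 / (real m + 2))) = \<infinity>"
  proof (rule ccontr)
    assume "(\<Sum>m. ennreal (1 / (real m + 2))) \<noteq> \<infinity>"
    then have "summable (\<lambda>m. 1 / (real m + 2))" by (intro summable_suminf_not_top) auto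
    then have "summable (\<lambda>m. inverse (real (m + 2)))" by (simp add: field_simps add.commute)
    then have "summable (\<lambda>n. inverse (real n))" by (rule summable_iff_shift[THEN iffD1])
    then show False using not_summable_harmonic[where 'a=real] by simp
  qed
  have "\<infinity> = (\<Sum>m. \<integral>\<^sup>+ t. ennreal (1 / (real m + 2)) * indicator {real m + 1..<real m + 2} t \<partial>lborel)"
    unfolding inf[symmetric] by (simp add: nn_integral_cmult_indicator)
  also have "\<dots> = (\<integral>\<^sup>+ t. (\<Sum>m. ennreal (1 / (real m + 2)) * indicator {real m + 1..<real m + 2} t) \<partial>lborel)"
    by (rule nn_integral_suminf[symmetric]) simp
  also have "\<dots> \<le> (\<integral>\<^sup>+ t\<in>{1..}. ennreal (1 / t) \<partial>lborel)"
    by (intro nn_integral_mono pw)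
  finally show ?thesis by (simp add: top_unique)
qed

lemma log_div:
  fixes k n :: nat
  assumes k: "k > 0" and n: "n \<ge> 1"
  shows "(\<integral>\<^sup>+ t\<in>{1..}. ennreal (t ^ (n - 1) * exp (- real k * (real n / real k * ln t))) \<partial>lborel) = \<infinity>"
proof -
  have pw: "t ^ (n - 1) * exp (- real k * (real n / real k * ln t)) = 1 / t" if "t \<ge> 1" for t :: real
  proof -
    have tp: "t > 0" using that by simp
    have "exp (- real k * (real n / real k * ln t)) = exp (- (real n * ln t))" using k by simp
    also have "\<dots> = inverse (exp (ln (t ^ n)))" using tp by (simp add: exp_minus ln_realpow)
    also have "\<dots> = inverse (t ^ n)" using tp by simp
    finally have e: "exp (- real k * (real n / real k * ln t)) = inverse (t ^ n)" .
    have "t ^ n = t * t ^ (n - 1)" using n by (metis Suc_diff_1 le_numeral_extra(2) less_le_trans not_less power_Suc zero_less_one)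
    then show ?thesis unfolding e using tp by (simp add: field_simps)
  qed
  have "(\<integral>\<^sup>+ t\<in>{1..}. ennreal (t ^ (n - 1) * exp (- real k * (real n / real k * ln t))) \<partial>lborel)
      = (\<integral>\<^sup>+ t\<in>{1..}. ennreal (1 / t) \<partial>lborel)"
  proof (intro nn_integral_cong)
    fix x :: real
    show "ennreal (x ^ (n - 1) * exp (- real k * (real n / real k * ln x))) * indicator {1..} x
        = ennreal (1 / x) * indicator {1..} x"
    proof (cases "1 \<le> x")
      case True then show ?thesis unfolding pw[OF True] by simp
    next
      case False then show ?thesis by simp
    qed
  qed
  then show ?thesis using harmonic_int by simp
qed

theorem lemma2p8:
  fixes M :: "'a::metric_space measure"
    and C :: "(real ^ 'n) set"
    and f :: "real ^ 'n \<Rightarrow> 'a \<Rightarrow> 'a"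
    and \<Delta> :: "'a \<Rightarrow> real"
    and k :: nat and t0 :: real and r :: "real \<Rightarrow> real"
    and \<Sigma> :: "(real ^ 'n) set"
  assumes prob: "prob_space M"
    and borel: "sets M = sets borel"
    and k_pos: "k > 0"
    and C_ne: "C \<noteq> {}" and C_open: "open C" and C_cone: "pos_cone C"
    and C_add: "\<And>z w. z \<in> C \<Longrightarrow> w \<in> C \<Longrightarrow> z + w \<in> C"
    and f_mp: "\<And>z. z \<in> C \<Longrightarrow> meas_pres M (f z)"
    and f_hom: "\<And>z w. z \<in> C \<Longrightarrow> w \<in> C \<Longrightarrow> f (z + w) = f z \<circ> f w"
    and f_cont: "\<And>z e. z \<in> C \<Longrightarrow> e > 0 \<Longrightarrow>
                   \<exists>\<delta>>0. \<forall>w\<in>C. dist w z < \<delta> \<longrightarrow> map_dist (f w) (f z) < ereal e"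
    and DL: "kDL M k \<Delta>"
    and qi: "quasi_increasing t0 r"
    and div: "(\<integral>\<^sup>+ t\<in>{t0..}. ennreal (t ^ (CARD('n) - 1) * exp (- real k * r t)) \<partial>lborel) = \<infinity>"
    and lat: "is_lattice \<Sigma>"
    and BC: "borel_cantelli M \<Delta> (C \<inter> \<Sigma>) f"
  shows "(AE x in M. \<forall>R. \<exists>z\<in>C. norm z > R \<and> \<Delta> (f z x) \<ge> r (norm z))
       \<and> (AE x in M. Limsup (at_infinity \<sqinter> principal C) (\<lambda>z. ereal (\<Delta> (f z x) / ln (norm z)))
                      \<ge> ereal (real CARD('n) / real k))"
proof
  show "AE x in M. \<forall>R. \<exists>z\<in>C. norm z > R \<and> \<Delta> (f z x) \<ge> r (norm z)"
    by (rule first_part[OF prob borel C_ne C_open C_cone C_add DL qi div lat BC])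
next
  define rl where "rl t = real CARD('n) / real k * ln t" for t
  have qil: "quasi_increasing 1 rl" unfolding quasi_increasing_def
  proof (intro exI[of _ 1] allI impI)
    fix t1 t2 :: real assume "1 \<le> t1" "t1 \<le> t2" "t2 < t1 + 1"
    then have "ln t1 \<le> ln t2" by simp
    then have "rl t1 \<le> rl t2" unfolding rl_def by (intro mult_left_mono) auto
    then show "rl t2 > rl t1 - 1" by simp
  qed
  have divl: "(\<integral>\<^sup>+ t\<in>{1..}. ennreal (t ^ (CARD('n) - 1) * exp (- real k * rl t)) \<partial>lborel) = \<infinity>"
    unfolding rl_def by (rule log_div[OF k_pos]) (simp add: Suc_le_eq)
  have AEl: "AE x in M. \<forall>R. \<exists>z\<in>C. norm z > R \<and> \<Delta> (f z x) \<ge> rl (norm z)"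
    by (rule first_part[OF prob borel C_ne C_open C_cone C_add DL qil divl lat BC])
  show "AE x in M. Limsup (at_infinity \<sqinter> principal C) (\<lambda>z. ereal (\<Delta> (f z x) / ln (norm z)))
                      \<ge> ereal (real CARD('n) / real k)"
    using AEl
  proof (rule AE_mp, intro AE_I2 impI)
    fix x assume hx: "\<forall>R. \<exists>z\<in>C. norm z > R \<and> \<Delta> (f z x) \<ge> rl (norm z)"
    show "Limsup (at_infinity \<sqinter> principal C) (\<lambda>z. ereal (\<Delta> (f z x) / ln (norm z)))
                      \<ge> ereal (real CARD('n) / real k)"
      unfolding Limsup_def
    proof (rule INF_greatest)
      fix P assume "P \<in> {P. eventually P (at_infinity \<sqinter> principal C)}"
      then have "eventually (\<lambda>z. z \<in> C \<longrightarrow> P z) at_infinity"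
        by (simp add: eventually_inf_principal)
      then obtain b where b: "\<And>z. norm z \<ge> b \<Longrightarrow> z \<in> C \<longrightarrow> P z"
        unfolding eventually_at_infinity by blast
      obtain z where z: "z \<in> C" "norm z > max b 1" "\<Delta> (f z x) \<ge> rl (norm z)" using hx by blast
      have Pz: "P z" using b[of z] z by simp
      have lnp: "ln (norm z) > 0" using z(2) by (intro ln_gt_zero) simp
      have "real CARD('n) / real k \<le> \<Delta> (f z x) / ln (norm z)"
        using z(3) lnp unfolding rl_def by (simp add: le_divide_eq mult.commute)
      then have "ereal (real CARD('n) / real k) \<le> ereal (\<Delta> (f z x) / ln (norm z))" by simp
      also have "\<dots> \<le> \<Squnion> ((\<lambda>z. ereal (\<Delta> (f z x) / ln (norm z))) ` {x. P x})"
        using Pz by (intro SUP_upper) simp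
      finally show "ereal (real CARD('n) / real k) \<le> \<Squnion> ((\<lambda>z. ereal (\<Delta> (f z x) / ln (norm z))) ` {x. P x})" .
    qed
  qed
qed

end
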